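(* For every $g\ge 1$, $\det(A_g)=4^{\frac{1}{9}\cdot 4^g+\frac{2}{3}g-\frac{1}{9}}$.
   Context: The graphs $\mathcal{H}_g$ with hubs $v_1,v_2,v_3,v_4$ and orientations $\mathcal{H}_g^e$ are defined recursively. $\mathcal{H}_1$ is the 4-cycle with edges $\{v_1,v_2\},\{v_1,v_3\},\{v_2,v_4\},\{v_3,v_4\}$, oriented $v_1\to v_2$, $v_1\to v_3$, $v_4\to v_2$, $v_3\to v_4$. For $g>1$, take four disjoint copies $\mathcal{H}_{g-1}^{(i)}$, $i=1,\dots,4$, of $\mathcal{H}_{g-1}$, each oriented as a copy of $\mathcal{H}_{g-1}^e$, with hubs $v_k^{(i)}$; identify $v_1^{(1)},v_1^{(4)}$ as $v_1$, $v_2^{(2)},v_1^{(3)}$ as $v_4$, $v_2^{(1)},v_1^{(2)}$ as $v_3$, and $v_2^{(3)},v_2^{(4)}$ as $v_2$; $\mathcal{H}_g^e$ is the union of the copies' orientations. $A_g$ is the skew adjacency matrix of $\mathcal{H}_g^e$: its $(u,v)$ entry is $1$ if $u\to v$ is an arc, $-1$ if $v\to u$ is an arc, and $0$ otherwise. *)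

theory Defs
  imports Complex_Main "Jordan_Normal_Form.Determinant"
begin

(* Vertices of H_g are the naturals 0 ..< hg_nv g.  The hubs are
   v1 = 0, v2 = 1, v3 = 2, v4 = 3. *)

fun hg_nv :: "nat \<Rightarrow> nat" where
  "hg_nv 0 = 0"
| "hg_nv (Suc 0) = 4"
| "hg_nv (Suc (Suc g)) = 4 * hg_nv (Suc g) - 4"

(* Embedding of vertex x of copy i (i = 0..3, standing for copies 1..4) of
   H_{g-1} (which has n vertices) into H_g:
   copy 1: v1 -> v1, v2 -> v3;  copy 2: v1 -> v3, v2 -> v4;
   copy 3: v1 -> v4, v2 -> v2;  copy 4: v1 -> v1, v2 -> v2;
   all other vertices of the copies receive fresh, distinct labels. *)
definition hg_emb :: "nat \<Rightarrow> nat \<Rightarrow> nat \<Rightarrow> nat" where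
  "hg_emb n i x =
     (if x = 0 then [0, 2, 3, 0] ! i
      else if x = 1 then [2, 3, 1, 1] ! i
      else 4 + i * (n - 2) + (x - 2))"

fun hg_arcs :: "nat \<Rightarrow> (nat \<times> nat) set" where
  "hg_arcs 0 = {}"
| "hg_arcs (Suc 0) = {(0, 1), (0, 2), (3, 1), (2, 3)}"
| "hg_arcs (Suc (Suc g)) =
     (\<Union>i<4. (\<lambda>(a, b). (hg_emb (hg_nv (Suc g)) i a, hg_emb (hg_nv (Suc g)) i b))
              ` hg_arcs (Suc g))"

definition skew_adj :: "nat \<Rightarrow> int mat" where
  "skew_adj g = mat (hg_nv g) (hg_nv g)
     (\<lambda>(u, v). if (u, v) \<in> hg_arcs g then 1
               else if (v, u) \<in> hg_arcs g then -1 else 0)"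

end

theory Submission
  imports Defs
begin


lemma inv_exists:
  fixes B :: "real mat"
  assumes B: "B \<in> carrier_mat m m" and d: "det B \<noteq> 0"
  obtains Bi where "Bi \<in> carrier_mat m m" "B * Bi = 1\<^sub>m m" "Bi * B = 1\<^sub>m m"
proof -
  from det_non_zero_imp_unit[OF B d, unfolded Units_def, of "()"]
  obtain Bi where "Bi \<in> carrier_mat m m" "Bi * B = 1\<^sub>m m" "B * Bi = 1\<^sub>m m"
    by (auto simp: ring_mat_def)
  thus ?thesis using that by blast
qed

lemma schur_det:
  fixes X :: "real mat"
  assumes X: "X \<in> carrier_mat k k" and Y: "Y \<in> carrier_mat k m"
    and Z: "Z \<in> carrier_mat m k" and B: "B \<in> carrier_mat m m"
    and Bi: "Bi \<in> carrier_mat m m" and BBi: "B * Bi = 1\<^sub>m m"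
  shows "det (four_block_mat X Y Z B) = det B * det (X - Y * Bi * Z)"
proof -
  let ?N = "four_block_mat (1\<^sub>m k) (0\<^sub>m k m) (- (Bi * Z)) (1\<^sub>m m)"
  have M: "four_block_mat X Y Z B \<in> carrier_mat (k+m) (k+m)" using X Y Z B by auto
  have N: "?N \<in> carrier_mat (k+m) (k+m)" using Bi Z by auto
  have "four_block_mat X Y Z B * ?N = four_block_mat (X * 1\<^sub>m k + Y * (- (Bi * Z))) (X * 0\<^sub>m k m + Y * 1\<^sub>m m)
      (Z * 1\<^sub>m k + B * (- (Bi * Z))) (Z * 0\<^sub>m k m + B * 1\<^sub>m m)"
    by (rule mult_four_block_mat, insert X Y Z B Bi, auto)
  also have "Z * 1\<^sub>m k + B * (- (Bi * Z)) = 0\<^sub>m m k"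
  proof -
    have "B * (- (Bi * Z)) = - (B * (Bi * Z))" using B Bi Z by auto
    also have "B * (Bi * Z) = (B * Bi) * Z" using B Bi Z by (simp add: assoc_mult_mat)
    also have "\<dots> = Z" using BBi Z by simp
    finally show ?thesis using Z by auto
  qed
  also have "X * 1\<^sub>m k + Y * (- (Bi * Z)) = X - Y * Bi * Z"
    using X Y Z Bi by (auto simp: assoc_mult_mat mult_minus_distrib_mat)
  also have "X * 0\<^sub>m k m + Y * 1\<^sub>m m = Y" using X Y by auto
  also have "Z * 0\<^sub>m k m + B * 1\<^sub>m m = B" using Z B by auto
  finally have eq: "four_block_mat X Y Z B * ?N = four_block_mat (X - Y * Bi * Z) Y (0\<^sub>m m k) B" .
  have "det (four_block_mat X Y Z B) * det ?N = det (four_block_mat X Y Z B * ?N)"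
    using det_mult[OF M N] by simp
  also have "\<dots> = det (X - Y * Bi * Z) * det B"
    unfolding eq by (rule det_four_block_mat_lower_left_zero, insert X Y Z B Bi, auto)
  also have "det ?N = 1"
    by (subst det_four_block_mat_upper_right_zero, insert Bi Z, auto)
  finally show ?thesis by simp
qed



definition PP :: "nat \<Rightarrow> (nat \<Rightarrow> nat \<Rightarrow> nat) \<Rightarrow> nat \<Rightarrow> real mat \<Rightarrow> real mat \<Rightarrow> real mat \<Rightarrow> real mat \<Rightarrow> nat \<Rightarrow> real mat" where
"PP h hm m T C Zc B k = mat (h + k*m) (h + k*m) (\<lambda>(u,v).
  if u < h then (if v < h then T $$ (u,v) else (\<Sum>a<2. if hm ((v-h) div m) a = u then C $$ (a, (v-h) mod m) else 0))
  else if v < h then (\<Sum>b<2. if hm ((u-h) div m) b = v then Zc $$ ((u-h) mod m, b) else 0)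
  else if (u-h) div m = (v-h) div m then B $$ ((u-h) mod m, (v-h) mod m) else 0)"

definition Qm :: "nat \<Rightarrow> (nat \<Rightarrow> nat \<Rightarrow> nat) \<Rightarrow> nat \<Rightarrow> nat \<Rightarrow> real mat" where
"Qm h hm k N = mat N 2 (\<lambda>(u,a). if u < h \<and> hm k a = u then 1 else 0)"

lemma PP_carrier: "PP h hm m T C Zc B k \<in> carrier_mat (h+k*m) (h+k*m)"
  unfolding PP_def by auto

lemma PP_step:
  assumes m: "m > 0" and T: "T \<in> carrier_mat h h" and C: "C \<in> carrier_mat 2 m"
    and Zc: "Zc \<in> carrier_mat m 2" and B: "B \<in> carrier_mat m m"
  shows "PP h hm m T C Zc B (Suc k) = four_block_mat (PP h hm m T C Zc B k)
     (Qm h hm k (h+k*m) * C) (Zc * (Qm h hm k (h+k*m))\<^sup>T) B"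
proof (rule eq_matI)
  let ?N = "h+k*m"
  show "dim_row (PP h hm m T C Zc B (Suc k)) = dim_row (four_block_mat (PP h hm m T C Zc B k)
     (Qm h hm k (h+k*m) * C) (Zc * (Qm h hm k (h+k*m))\<^sup>T) B)" using B by (simp add: PP_def)
  show "dim_col (PP h hm m T C Zc B (Suc k)) = dim_col (four_block_mat (PP h hm m T C Zc B k)
     (Qm h hm k (h+k*m) * C) (Zc * (Qm h hm k (h+k*m))\<^sup>T) B)" using B by (simp add: PP_def)
  fix u v assume u: "u < dim_row (four_block_mat (PP h hm m T C Zc B k)
     (Qm h hm k (h+k*m) * C) (Zc * (Qm h hm k (h+k*m))\<^sup>T) B)"
    and v: "v < dim_col (four_block_mat (PP h hm m T C Zc B k)
     (Qm h hm k (h+k*m) * C) (Zc * (Qm h hm k (h+k*m))\<^sup>T) B)"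
  have u': "u < ?N + m" and v': "v < ?N + m" using u v B by (auto simp: PP_def)
  have divk: "x \<ge> ?N \<Longrightarrow> x < ?N + m \<Longrightarrow> (x - h) div m = k \<and> (x-h) mod m = x - ?N" for x
  proof -
    assume a: "x \<ge> ?N" "x < ?N + m"
    have d: "(x-h) div m = k" by (rule div_nat_eqI) (use a in \<open>auto simp: algebra_simps\<close>)
    have "(x-h) mod m = x - h - k*m" using d by (metis minus_div_mult_eq_mod)
    thus ?thesis using d by simp
  qed
  have divlt: "x \<ge> h \<Longrightarrow> x < ?N \<Longrightarrow> (x - h) div m < k" for x
    by (rule less_mult_imp_div_less) simp
  show "PP h hm m T C Zc B (Suc k) $$ (u, v) = four_block_mat (PP h hm m T C Zc B k)
     (Qm h hm k (h+k*m) * C) (Zc * (Qm h hm k (h+k*m))\<^sup>T) B $$ (u, v)"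
  proof -
    have L: "PP h hm m T C Zc B (Suc k) $$ (u, v) = (if u < h then (if v < h then T $$ (u,v) else (\<Sum>a<2. if hm ((v-h) div m) a = u then C $$ (a, (v-h) mod m) else 0))
  else if v < h then (\<Sum>b<2. if hm ((u-h) div m) b = v then Zc $$ ((u-h) mod m, b) else 0)
  else if (u-h) div m = (v-h) div m then B $$ ((u-h) mod m, (v-h) mod m) else 0)"
      using u' v' unfolding PP_def by (simp add: algebra_simps)
    show ?thesis
    proof (cases "u < ?N")
      case uN: True
      show ?thesis
      proof (cases "v < ?N")
        case True
        then show ?thesis using uN u' v' B unfolding L by (simp add: PP_def)
      next
        case False
        have "(Qm h hm k ?N * C) $$ (u, v - ?N) = (\<Sum>a<2. (if u < h \<and> hm k a = u then 1 else 0) * C $$ (a, v - ?N))"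
          using uN C v' False by (simp add: Qm_def scalar_prod_def lessThan_atLeast0)
        moreover have "u \<ge> h \<Longrightarrow> (u - h) div m \<noteq> (v - h) div m" using divk[of v] divlt[of u] False v' uN by auto
        ultimately show ?thesis using uN u' v' B C False divk[of v] unfolding L
          by (cases "u < h") (auto simp: PP_def Qm_def intro!: sum.cong)
      qed
    next
      case uN: False
      show ?thesis
      proof (cases "v < ?N")
        case True
        have "(Zc * (Qm h hm k ?N)\<^sup>T) $$ (u - ?N, v) = (\<Sum>b<2. Zc $$ (u - ?N, b) * (if v < h \<and> hm k b = v then 1 else 0))"
          using uN Zc v' u' True by (simp add: Qm_def scalar_prod_def lessThan_atLeast0)
        moreover have "v \<ge> h \<Longrightarrow> (u - h) div m \<noteq> (v - h) div m" using divk[of u] divlt[of v] True u' uN by auto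
        ultimately show ?thesis using uN u' v' B Zc True divk[of u] unfolding L
          by (cases "v < h") (auto simp: PP_def Qm_def intro!: sum.cong)
      next
        case False
        then show ?thesis using uN u' v' B divk[of u] divk[of v] unfolding L by (simp add: PP_def)
      qed
    qed
  qed
qed

definition Qh :: "nat \<Rightarrow> (nat \<Rightarrow> nat \<Rightarrow> nat) \<Rightarrow> nat \<Rightarrow> real mat" where
"Qh h hm k = mat h 2 (\<lambda>(u,a). if hm k a = u then 1 else 0)"

lemma QWQ_entry:
  fixes Q W :: "real mat"
  assumes Q: "Q \<in> carrier_mat N 2" and W: "W \<in> carrier_mat 2 2" and u: "u < N" and v: "v < N"
  shows "(Q * W * Q\<^sup>T) $$ (u,v) = (\<Sum>b<2. (\<Sum>a<2. Q $$ (u,a) * W $$ (a,b)) * Q $$ (v,b))"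
  using Q W u v by (simp add: scalar_prod_def lessThan_atLeast0 row_def col_def sum.atLeast0_lessThan_Suc numeral_2_eq_2 algebra_simps)

lemma PP_schur_step:
  assumes m: "m > 0" and T: "T \<in> carrier_mat h h" and C: "C \<in> carrier_mat 2 m"
    and Zc: "Zc \<in> carrier_mat m 2" and B: "B \<in> carrier_mat m m"
    and Bi: "Bi \<in> carrier_mat m m" and BBi: "B * Bi = 1\<^sub>m m"
  shows "det (PP h hm m T C Zc B (Suc k)) =
    det B * det (PP h hm m (T - Qh h hm k * (C * Bi * Zc) * (Qh h hm k)\<^sup>T) C Zc B k)"
proof -
  let ?N = "h + k*m"
  let ?Q = "Qm h hm k ?N"
  let ?W = "C * Bi * Zc"
  have Q: "?Q \<in> carrier_mat ?N 2" by (simp add: Qm_def)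
  have W: "?W \<in> carrier_mat 2 2" using C Bi Zc by auto
  have Qh: "Qh h hm k \<in> carrier_mat h 2" by (simp add: Qh_def)
  have "det (PP h hm m T C Zc B (Suc k)) = det B * det (PP h hm m T C Zc B k - ?Q * C * Bi * (Zc * ?Q\<^sup>T))"
    unfolding PP_step[OF m T C Zc B]
    by (rule schur_det[OF PP_carrier _ _ B Bi BBi], insert Q C Zc, auto)
  also have "?Q * C * Bi * (Zc * ?Q\<^sup>T) = ?Q * ?W * ?Q\<^sup>T"
  proof -
    have QC: "?Q * C \<in> carrier_mat ?N m" using Q C by auto
    have QCBi: "?Q * C * Bi \<in> carrier_mat ?N m" using QC Bi by auto
    have ZQ: "?Q\<^sup>T \<in> carrier_mat 2 ?N" using Q by auto
    have f1: "?Q * C * Bi * (Zc * ?Q\<^sup>T) = ?Q * C * Bi * Zc * ?Q\<^sup>T"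
      using assoc_mult_mat[OF QCBi Zc ZQ] by simp
    have e1: "?Q * C * Bi = ?Q * (C * Bi)" using assoc_mult_mat[OF Q C Bi] .
    have e2: "?Q * (C * Bi) * Zc = ?Q * (C * Bi * Zc)"
      using assoc_mult_mat[OF Q _ Zc, of "C * Bi"] C Bi by auto
    show ?thesis unfolding f1 by (subst e1, subst e2, rule refl)
  qed
  also have "PP h hm m T C Zc B k - ?Q * ?W * ?Q\<^sup>T = PP h hm m (T - Qh h hm k * ?W * (Qh h hm k)\<^sup>T) C Zc B k"
  proof (rule eq_matI)
    fix u v assume u: "u < dim_row (PP h hm m (T - Qh h hm k * ?W * (Qh h hm k)\<^sup>T) C Zc B k)"
      and v: "v < dim_col (PP h hm m (T - Qh h hm k * ?W * (Qh h hm k)\<^sup>T) C Zc B k)"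
    have u': "u < ?N" and v': "v < ?N" using u v by (auto simp: PP_def)
    have e: "(?Q * ?W * ?Q\<^sup>T) $$ (u,v) = (if u < h \<and> v < h then (Qh h hm k * ?W * (Qh h hm k)\<^sup>T) $$ (u,v) else 0)"
    proof (cases "u < h \<and> v < h")
      case True
      then have uh: "u < h" "v < h" by auto
      show ?thesis unfolding QWQ_entry[OF Q W u' v'] QWQ_entry[OF Qh W uh]
        using u' v' uh by (simp add: Qm_def Qh_def)
    next
      case False
      have "(?Q * ?W * ?Q\<^sup>T) $$ (u,v) = 0"
      proof (cases "u < h")
        case True
        with False have "\<not> v < h" by auto
        then show ?thesis unfolding QWQ_entry[OF Q W u' v'] using u' v' by (simp add: Qm_def)
      next
        case False
        then show ?thesis unfolding QWQ_entry[OF Q W u' v'] using u' v' by (simp add: Qm_def)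
      qed
      with False show ?thesis by auto
    qed
    show "(PP h hm m T C Zc B k - ?Q * ?W * ?Q\<^sup>T) $$ (u, v) = PP h hm m (T - Qh h hm k * ?W * (Qh h hm k)\<^sup>T) C Zc B k $$ (u, v)"
    proof -
      have "(PP h hm m T C Zc B k - ?Q * ?W * ?Q\<^sup>T) $$ (u, v) = PP h hm m T C Zc B k $$ (u,v) - (?Q * ?W * ?Q\<^sup>T) $$ (u, v)"
        by (rule index_minus_mat(1)) (use u' v' Q W in auto)
      also have "\<dots> = PP h hm m T C Zc B k $$ (u,v) - (if u < h \<and> v < h then (Qh h hm k * ?W * (Qh h hm k)\<^sup>T) $$ (u,v) else 0)"
        unfolding e ..
      also have "\<dots> = PP h hm m (T - Qh h hm k * ?W * (Qh h hm k)\<^sup>T) C Zc B k $$ (u, v)"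
        using u' v' Q W Qh T by (simp add: PP_def)
      finally show ?thesis .
    qed
  qed (use Q W in \<open>auto simp: PP_def\<close>)
  finally show ?thesis .
qed


fun red :: "nat \<Rightarrow> (nat \<Rightarrow> nat \<Rightarrow> nat) \<Rightarrow> real mat \<Rightarrow> real mat \<Rightarrow> nat \<Rightarrow> real mat" where
  "red h hm W T 0 = T"
| "red h hm W T (Suc k) = red h hm W (T - Qh h hm k * W * (Qh h hm k)\<^sup>T) k"

lemma red_carrier: "T \<in> carrier_mat h h \<Longrightarrow> W \<in> carrier_mat 2 2 \<Longrightarrow> red h hm W T k \<in> carrier_mat h h"
proof (induction k arbitrary: T)
  case (Suc k)
  have "T - Qh h hm k * W * (Qh h hm k)\<^sup>T \<in> carrier_mat h h" using Suc.prems by (auto simp: Qh_def)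
  then show ?case using Suc by simp
qed simp

lemma Qh_entry: "W \<in> carrier_mat 2 2 \<Longrightarrow> u < h \<Longrightarrow> v < h \<Longrightarrow>
  (Qh h hm i * W * (Qh h hm i)\<^sup>T) $$ (u,v) = (\<Sum>b<2. (\<Sum>a<2. (if hm i a = u then 1 else 0) * W $$ (a,b)) * (if hm i b = v then 1 else 0))"
  by (subst QWQ_entry[of _ h]) (auto simp: Qh_def)

lemma red_entry: "T \<in> carrier_mat h h \<Longrightarrow> W \<in> carrier_mat 2 2 \<Longrightarrow> u < h \<Longrightarrow> v < h \<Longrightarrow>
  red h hm W T k $$ (u,v) = T $$ (u,v) - (\<Sum>i<k. (Qh h hm i * W * (Qh h hm i)\<^sup>T) $$ (u,v))"
proof (induction k arbitrary: T)
  case (Suc k)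
  have "T - Qh h hm k * W * (Qh h hm k)\<^sup>T \<in> carrier_mat h h" using Suc.prems by (auto simp: Qh_def)
  then show ?case using Suc by (simp add: Qh_def)
qed simp

lemma PP_det:
  assumes m: "m > 0" and T: "T \<in> carrier_mat h h" and C: "C \<in> carrier_mat 2 m"
    and Zc: "Zc \<in> carrier_mat m 2" and B: "B \<in> carrier_mat m m"
    and Bi: "Bi \<in> carrier_mat m m" and BBi: "B * Bi = 1\<^sub>m m"
  shows "det (PP h hm m T C Zc B k) = det B ^ k * det (red h hm (C * Bi * Zc) T k)"
  using T
proof (induction k arbitrary: T)
  case 0
  have "PP h hm m T C Zc B 0 = T"
    by (rule eq_matI) (use 0 in \<open>auto simp: PP_def\<close>)
  then show ?case by simp
next
  case (Suc k)
  have W: "C * Bi * Zc \<in> carrier_mat 2 2" using C Bi Zc by auto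
  have T': "T - Qh h hm k * (C * Bi * Zc) * (Qh h hm k)\<^sup>T \<in> carrier_mat h h" using Suc.prems W by (auto simp: Qh_def)
  show ?case unfolding PP_schur_step[OF m Suc.prems C Zc B Bi BBi] Suc.IH[OF T'] by simp
qed



lemma det2: "det (mat 2 2 f :: real mat) = f (0,0) * f (1,1) - f (0,1) * f (1,0)"
proof -
  have "det (mat 2 2 f) = (\<Sum>j<2. mat 2 2 f $$ (0,j) * cofactor (mat 2 2 f) 0 j)"
    by (rule laplace_expansion_row) auto
  also have "\<dots> = f (0,0) * f (1,1) - f (0,1) * f (1,0)"
    by (simp add: cofactor_def mat_delete_def det_single numeral_2_eq_2 lessThan_Suc)
  finally show ?thesis .
qed

lemma det2': "det (mat (Suc (Suc 0)) (Suc (Suc 0)) f :: real mat) = f (0,0) * f (1,1) - f (0,1) * f (1,0)"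
  using det2 by (simp add: numeral_2_eq_2)

lemma det3: "det (mat 3 3 f :: real mat) = f (0,0) * (f (1,1) * f (2,2) - f (1,2) * f (2,1))
   - f (0,1) * (f (1,0) * f (2,2) - f (1,2) * f (2,0)) + f (0,2) * (f (1,0) * f (2,1) - f (1,1) * f (2,0))"
proof -
  have "det (mat 3 3 f) = (\<Sum>j<3. mat 3 3 f $$ (0,j) * cofactor (mat 3 3 f) 0 j)"
    by (rule laplace_expansion_row) auto
  also have "\<dots> = f (0,0) * (f (1,1) * f (2,2) - f (1,2) * f (2,1))
   - f (0,1) * (f (1,0) * f (2,2) - f (1,2) * f (2,0)) + f (0,2) * (f (1,0) * f (2,1) - f (1,1) * f (2,0))"
    unfolding cofactor_def mat_delete_def
    by (simp add: det2' numeral_3_eq_3 numeral_2_eq_2 lessThan_Suc algebra_simps)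
  finally show ?thesis .
qed


lemma det3': "det (mat (Suc (Suc (Suc 0))) (Suc (Suc (Suc 0))) f :: real mat) = f (0,0) * (f (1,1) * f (2,2) - f (1,2) * f (2,1))
   - f (0,1) * (f (1,0) * f (2,2) - f (1,2) * f (2,0)) + f (0,2) * (f (1,0) * f (2,1) - f (1,1) * f (2,0))"
  using det3 by (simp add: numeral_3_eq_3)

lemma det4: "det (mat 4 4 f :: real mat) = (\<Sum>j<4. (-1)^j * f (0,j) *
   det (mat 3 3 (\<lambda>(i,k). f (Suc i, if k < j then k else Suc k))))"
proof -
  have "det (mat 4 4 f) = (\<Sum>j<4. mat 4 4 f $$ (0,j) * cofactor (mat 4 4 f) 0 j)"
    by (rule laplace_expansion_row) auto
  also have "\<dots> = (\<Sum>j<4. (-1)^j * f (0,j) *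
   det (mat 3 3 (\<lambda>(i,k). f (Suc i, if k < j then k else Suc k))))"
    unfolding cofactor_def mat_delete_def
    by (intro sum.cong refl) (auto intro!: arg_cong[where f=det] eq_matI)
  finally show ?thesis .
qed

lemma det4_pattern:
  fixes s :: real
  assumes "\<And>u v. u < 4 \<Longrightarrow> v < 4 \<Longrightarrow> f (u,v) = s * (if (u,v) \<in> {(0,1),(0,2),(3,1),(2,3)} then 1
      else if (v,u) \<in> {(0,1),(0,2),(3,1),(2,3)} then -1 else 0)"
  shows "det (mat 4 4 f) = 4 * s^4"
proof -
  have "det (mat 4 4 f) = (\<Sum>j<4. (-1)^j * f (0,j) *
   det (mat 3 3 (\<lambda>(i,k). f (Suc i, if k < j then k else Suc k))))" by (rule det4)
  also have "\<dots> = 4 * s^4"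
    by (simp add: det3' numeral_3_eq_3 numeral_2_eq_2 lessThan_Suc assms eval_nat_numeral algebra_simps)
  finally show ?thesis .
qed



definition intr :: "real mat \<Rightarrow> real mat" where
  "intr A = mat (dim_row A - 2) (dim_col A - 2) (\<lambda>(x,y). A $$ (x+2, y+2))"
definition blkM :: "real mat \<Rightarrow> real mat" where
  "blkM A = mat 2 2 (\<lambda>(a,b). A $$ (a,b))"
definition blkC :: "real mat \<Rightarrow> real mat" where
  "blkC A = mat 2 (dim_col A - 2) (\<lambda>(a,x). A $$ (a, x+2))"
definition blkZ :: "real mat \<Rightarrow> real mat" where
  "blkZ A = mat (dim_row A - 2) 2 (\<lambda>(x,b). A $$ (x+2, b))"

lemma ss2: "\<not> (i::nat) < 2 \<Longrightarrow> Suc (Suc (i - 2)) = i" by arith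

lemma blk_decomp: assumes A: "A \<in> carrier_mat n n" and n: "n \<ge> 2"
  shows "A = four_block_mat (blkM A) (blkC A) (blkZ A) (intr A)"
  by (rule eq_matI) (use A n in \<open>auto simp: blkM_def blkC_def blkZ_def intr_def ss2\<close>)

lemma intr_PP:
  assumes hmB: "\<And>i a. hmB i a = (if hmA i a \<ge> 2 then hmA i a - 2 else 2)"
    and T: "T \<in> carrier_mat 4 4"
  shows "intr (PP 4 hmA m T C Zc B k) = PP 2 hmB m (intr T) C Zc B k"
proof (rule eq_matI)
  fix x y assume x: "x < dim_row (PP 2 hmB m (intr T) C Zc B k)" and y: "y < dim_col (PP 2 hmB m (intr T) C Zc B k)"
  have x': "x < 2 + k*m" and y': "y < 2 + k*m" using x y by (auto simp: PP_def)
  have c: "\<And>c a. x < 2 \<Longrightarrow> (hmA c a = x + 2) = (hmB c a = x)" using hmB by auto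
  have c2: "\<And>c a. y < 2 \<Longrightarrow> (hmA c a = y + 2) = (hmB c a = y)" using hmB by auto
  show "intr (PP 4 hmA m T C Zc B k) $$ (x, y) = PP 2 hmB m (intr T) C Zc B k $$ (x, y)"
    using x' y' T c c2 by (auto simp: intr_def PP_def intro!: sum.cong)
qed (use T in \<open>auto simp: intr_def PP_def\<close>)


lemma skew_inv:
  fixes B Bi :: "real mat"
  assumes B: "B \<in> carrier_mat m m" and Bi: "Bi \<in> carrier_mat m m" and BBi: "B * Bi = 1\<^sub>m m"
    and sk: "B\<^sup>T = - B"
  shows "Bi\<^sup>T = - Bi"
proof -
  have "Bi\<^sup>T * B\<^sup>T = (B * Bi)\<^sup>T" using transpose_mult[OF B Bi] by simp
  also have "\<dots> = 1\<^sub>m m" using BBi by simp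
  finally have "Bi\<^sup>T * (- B) = 1\<^sub>m m" using sk by simp
  hence h: "- (Bi\<^sup>T * B) = 1\<^sub>m m" using Bi B by simp
  have e: "Bi\<^sup>T * B = - 1\<^sub>m m"
  proof -
    have "Bi\<^sup>T * B = - (- (Bi\<^sup>T * B))" by simp
    also have "\<dots> = - 1\<^sub>m m" unfolding h ..
    finally show ?thesis .
  qed
  have "Bi\<^sup>T = Bi\<^sup>T * (B * Bi)" using BBi Bi by simp
  also have "\<dots> = (Bi\<^sup>T * B) * Bi" by (rule assoc_mult_mat[symmetric]) (use Bi B in auto)
  also have "\<dots> = - Bi" unfolding e using Bi by simp
  finally show ?thesis .
qed

lemma skew_W:
  fixes A Bi :: "real mat"
  assumes A: "A \<in> carrier_mat n n" and n: "n \<ge> 2" and sk: "\<And>i j. i < n \<Longrightarrow> j < n \<Longrightarrow> A $$ (j,i) = - A $$ (i,j)"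
    and Bi: "Bi \<in> carrier_mat (n-2) (n-2)" and BBi: "intr A * Bi = 1\<^sub>m (n-2)"
  shows "(blkC A * Bi * blkZ A)\<^sup>T = - (blkC A * Bi * blkZ A)"
proof -
  let ?C = "blkC A" and ?Z = "blkZ A" and ?B = "intr A"
  have C: "?C \<in> carrier_mat 2 (n-2)" using A by (auto simp: blkC_def)
  have Z: "?Z \<in> carrier_mat (n-2) 2" using A by (auto simp: blkZ_def)
  have B: "?B \<in> carrier_mat (n-2) (n-2)" using A by (auto simp: intr_def)
  have ZC: "?Z\<^sup>T = - ?C"
  proof (rule eq_matI)
    fix i j assume "i < dim_row (- ?C)" "j < dim_col (- ?C)"
    then show "?Z\<^sup>T $$ (i,j) = (- ?C) $$ (i,j)" using A n sk[of i "j+2"] by (auto simp: blkZ_def blkC_def)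
  qed (use A in \<open>auto simp: blkZ_def blkC_def\<close>)
  have CZ: "?C\<^sup>T = - ?Z"
  proof (rule eq_matI)
    fix i j assume "i < dim_row (- ?Z)" "j < dim_col (- ?Z)"
    then show "?C\<^sup>T $$ (i,j) = (- ?Z) $$ (i,j)" using A n sk[of "i+2" j] by (auto simp: blkZ_def blkC_def)
  qed (use A in \<open>auto simp: blkZ_def blkC_def\<close>)
  have BT: "?B\<^sup>T = - ?B"
  proof (rule eq_matI)
    fix i j assume "i < dim_row (- ?B)" "j < dim_col (- ?B)"
    then show "?B\<^sup>T $$ (i,j) = (- ?B) $$ (i,j)" using A n sk[of "i+2" "j+2"] by (auto simp: intr_def)
  qed (use A in \<open>auto simp: intr_def\<close>)
  have BiT: "Bi\<^sup>T = - Bi" by (rule skew_inv[OF B Bi BBi BT])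
  have "(?C * Bi * ?Z)\<^sup>T = ?Z\<^sup>T * (?C * Bi)\<^sup>T"
    by (rule transpose_mult) (use C Bi Z in auto)
  also have "(?C * Bi)\<^sup>T = Bi\<^sup>T * ?C\<^sup>T" by (rule transpose_mult[OF C Bi])
  also have "?Z\<^sup>T * (Bi\<^sup>T * ?C\<^sup>T) = - ?C * (- Bi * - ?Z)" unfolding ZC CZ BiT ..
  also have "\<dots> = - (?C * (Bi * ?Z))" using C Bi Z by simp
  also have "?C * (Bi * ?Z) = ?C * Bi * ?Z" using C Bi Z by simp
  finally show ?thesis .
qed



lemma nv_ge: "hg_nv (Suc k) \<ge> 4"
  by (induction k) auto

lemma nv_SS: "hg_nv (Suc (Suc k)) = 4 + 4 * (hg_nv (Suc k) - 2)"
  using nv_ge[of k] by simp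

lemma i4: "(i::nat) < 4 \<Longrightarrow> i = 0 \<or> i = 1 \<or> i = 2 \<or> i = 3" by auto

lemma emb_hub: "i < 4 \<Longrightarrow> a < 2 \<Longrightarrow> hg_emb n i a < 4"
  using i4[of i] by (auto simp: hg_emb_def less_2_cases_iff)

lemma emb_hub0: "a < 2 \<Longrightarrow> hg_emb n i a = hg_emb 0 i a"
  by (auto simp: hg_emb_def less_2_cases_iff)

lemma emb_int: "2 \<le> x \<Longrightarrow> hg_emb n i x = 4 + i*(n-2) + (x-2)"
  by (auto simp: hg_emb_def)

lemma emb_lt: assumes "n \<ge> 4" "i < 4" "x < n" shows "hg_emb n i x < 4 + 4*(n-2)"
proof (cases "x < 2")
  case True then show ?thesis using emb_hub[OF assms(2) True, of n] by simp
next
  case False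
  have 1: "i*(n-2) \<le> 3*(n-2)" using assms by auto
  have 2: "x < (n-2) + 2" using assms by simp
  have 3: "hg_emb n i x = 4 + i*(n-2) + (x-2)" using False by (simp add: emb_int)
  show ?thesis unfolding 3 using 1 2 False by linarith
qed

lemma divmod_eq: "(r::nat) < m \<Longrightarrow> (i*m + r) div m = i \<and> (i*m+r) mod m = r"
proof -
  assume r: "r < m"
  have d: "(i*m + r) div m = i" by (rule div_nat_eqI) (use r in \<open>auto simp: algebra_simps\<close>)
  have "(i*m + r) mod m = i*m + r - i*m" using d by (metis minus_div_mult_eq_mod)
  then show ?thesis using d by simp
qed

lemma emb_inj: assumes n: "n \<ge> 4" and i: "i < 4" and j: "j < 4" and a: "a < n" and b: "b < n"
  and a2: "2 \<le> a" and e: "hg_emb n i a = hg_emb n j b"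
  shows "i = j \<and> a = b"
proof -
  have b2: "2 \<le> b"
  proof (rule ccontr)
    assume "\<not> 2 \<le> b"
    then have "hg_emb n j b < 4" using emb_hub[OF j] by simp
    moreover have "hg_emb n i a \<ge> 4" using a2 by (simp add: emb_int)
    ultimately show False using e by simp
  qed
  have "i*(n-2) + (a-2) = j*(n-2) + (b-2)" using e a2 b2 by (simp add: emb_int)
  moreover have "a - 2 < n - 2" "b - 2 < n - 2" using a b a2 b2 by auto
  ultimately have "i = j \<and> a - 2 = b - 2" using divmod_eq[of "a-2" "n-2" i] divmod_eq[of "b-2" "n-2" j] by metis
  then show ?thesis using a2 b2 by auto
qed

lemma decode: assumes n: "n \<ge> 4" and w: "4 \<le> w" "w < 4 + 4*(n-2)"
  shows "(w-4) div (n-2) < 4 \<and> (w-4) mod (n-2) + 2 < n \<and>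
     hg_emb n ((w-4) div (n-2)) ((w-4) mod (n-2) + 2) = w"
proof -
  have m: "n - 2 > 0" using n by simp
  have "(w-4) div (n-2) < 4" by (rule less_mult_imp_div_less) (use w in simp)
  moreover have "(w-4) mod (n-2) < n - 2" using m by simp
  moreover have "hg_emb n ((w-4) div (n-2)) ((w-4) mod (n-2) + 2) = 4 + (w-4) div (n-2) * (n-2) + (w-4) mod (n-2)"
    by (simp add: emb_int)
  moreover have "(w-4) div (n-2) * (n-2) + (w-4) mod (n-2) = w - 4" by (rule div_mult_mod_eq)
  ultimately show ?thesis using w n by linarith
qed


lemma arcs_SS: "(p,q) \<in> hg_arcs (Suc (Suc k)) \<longleftrightarrow> (\<exists>i<4. \<exists>a b. (a,b) \<in> hg_arcs (Suc k) \<and>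
   p = hg_emb (hg_nv (Suc k)) i a \<and> q = hg_emb (hg_nv (Suc k)) i b)"
  by (simp only: hg_arcs.simps) force

lemma emb_small: "i < 4 \<Longrightarrow> hg_emb n i c < 4 \<Longrightarrow> c < 2"
  by (rule ccontr) (auto simp: emb_int)

lemma emb_same_inj: assumes "n \<ge> 4" "i < 4" "b < n" "c < n" "hg_emb n i b = hg_emb n i c"
  shows "b = c"
proof (cases "2 \<le> b")
  case True then show ?thesis using emb_inj[OF assms(1,2,2,3,4) True assms(5)] by simp
next
  case False
  show ?thesis
  proof (cases "2 \<le> c")
    case True then show ?thesis using emb_inj[OF assms(1,2,2,4,3) True assms(5)[symmetric]] by simp
  next
    case False
    have "b = 0 \<or> b = 1" "c = 0 \<or> c = 1" using False \<open>\<not> 2 \<le> b\<close> by auto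
    with assms(2,5) show ?thesis using i4[of i]
      by (auto simp: hg_emb_def)
  qed
qed

definition ginv :: "nat \<Rightarrow> bool" where
  "ginv k \<longleftrightarrow> (\<forall>a b. (a,b) \<in> hg_arcs (Suc k) \<longrightarrow> a < hg_nv (Suc k) \<and> b < hg_nv (Suc k)) \<and>
     (\<forall>a b. (a,b) \<in> hg_arcs (Suc k) \<longrightarrow> (b,a) \<notin> hg_arcs (Suc k)) \<and> (0,1) \<in> hg_arcs (Suc k)"

lemma hub01: "ginv k \<Longrightarrow> (a,b) \<in> hg_arcs (Suc k) \<Longrightarrow> a < 2 \<Longrightarrow> b < 2 \<Longrightarrow> a = 0 \<and> b = 1"
proof -
  assume I: "ginv k" and ab: "(a,b) \<in> hg_arcs (Suc k)" and a: "a < 2" and b: "b < 2"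
  have as: "(x,y) \<in> hg_arcs (Suc k) \<Longrightarrow> (y,x) \<notin> hg_arcs (Suc k)" for x y using I unfolding ginv_def by blast
  have r: "(0,1) \<in> hg_arcs (Suc k)" using I unfolding ginv_def by blast
  have "a = 0 \<or> a = 1" "b = 0 \<or> b = 1" using a b by auto
  then show ?thesis using as[OF ab] as[OF r] ab by auto
qed

lemma ginv_step: assumes I: "ginv k" shows "ginv (Suc k)"
proof -
  let ?n = "hg_nv (Suc k)"
  let ?A = "hg_arcs (Suc k)"
  let ?A' = "hg_arcs (Suc (Suc k))"
  have n: "?n \<ge> 4" by (rule nv_ge)
  have bnd: "(a,b) \<in> ?A \<Longrightarrow> a < ?n \<and> b < ?n" for a b using I unfolding ginv_def by blast
  have asym: "(a,b) \<in> ?A \<Longrightarrow> (b,a) \<notin> ?A" for a b using I unfolding ginv_def by blast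
  have r01: "(0,1) \<in> ?A" using I unfolding ginv_def by blast
  have P1: "p < hg_nv (Suc (Suc k)) \<and> q < hg_nv (Suc (Suc k))" if "(p,q) \<in> ?A'" for p q
  proof -
    from that obtain i a b where i: "i < 4" and ab: "(a,b) \<in> ?A" and p: "p = hg_emb ?n i a" and q: "q = hg_emb ?n i b"
      unfolding arcs_SS by blast
    show ?thesis unfolding nv_SS p q using emb_lt[OF n i] bnd[OF ab] by simp
  qed
  have P3: "(0,1) \<in> ?A'" unfolding arcs_SS
    by (rule exI[of _ 3], rule conjI, simp, rule exI[of _ 0], rule exI[of _ 1]) (use r01 in \<open>simp add: hg_emb_def\<close>)
  have P2: "(q,p) \<notin> ?A'" if "(p,q) \<in> ?A'" for p q
  proof
    assume "(q,p) \<in> ?A'"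
    from that obtain i a b where i: "i < 4" and ab: "(a,b) \<in> ?A" and p: "p = hg_emb ?n i a" and q: "q = hg_emb ?n i b"
      unfolding arcs_SS by blast
    from \<open>(q,p) \<in> ?A'\<close> obtain j c d where j: "j < 4" and cd: "(c,d) \<in> ?A" and q': "q = hg_emb ?n j c" and p': "p = hg_emb ?n j d"
      unfolding arcs_SS by blast
    have a: "a < ?n" and b: "b < ?n" and c: "c < ?n" and d: "d < ?n" using bnd[OF ab] bnd[OF cd] by auto
    show False
    proof (cases "2 \<le> a \<or> 2 \<le> b")
      case True
      then show False
      proof
        assume a2: "2 \<le> a"
        from emb_inj[OF n i j a d a2] p p' have ij: "i = j" "a = d" by auto
        with q q' have "b = c" using emb_same_inj[OF n i b c] by simp
        with ab cd ij asym show False by blast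
      next
        assume b2: "2 \<le> b"
        from emb_inj[OF n i j b c b2] q q' have ij: "i = j" "b = c" by auto
        with p p' have "a = d" using emb_same_inj[OF n i a d] by simp
        with ab cd ij asym show False by blast
      qed
    next
      case False
      then have a2: "a < 2" "b < 2" by auto
      with hub01[OF I ab] have ab01: "a = 0" "b = 1" by auto
      have "d < 2" using emb_small[OF j] p p' emb_hub[OF i a2(1)] by metis
      moreover have "c < 2" using emb_small[OF j] q q' emb_hub[OF i a2(2)] by metis
      ultimately have cd01: "c = 0" "d = 1" using hub01[OF I cd] by auto
      have "hg_emb ?n i 0 = hg_emb ?n j 1" "hg_emb ?n i 1 = hg_emb ?n j 0"
        using p p' q q' ab01 cd01 by auto
      then show False using i4[of i] i4[of j] i j by (auto simp: hg_emb_def)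
    qed
  qed
  show ?thesis unfolding ginv_def using P1 P2 P3 by blast
qed

lemma ginv_all: "ginv k"
proof (induction k)
  case 0
  show ?case unfolding ginv_def by auto
next
  case (Suc k)
  then show ?case by (rule ginv_step)
qed


definition sk :: "(nat \<times> nat) set \<Rightarrow> nat \<Rightarrow> nat \<Rightarrow> real" where
  "sk A u v = (if (u,v) \<in> A then 1 else if (v,u) \<in> A then -1 else 0)"

definition Mg :: "nat \<Rightarrow> real mat" where
  "Mg k = map_mat real_of_int (skew_adj (Suc k))"

lemma Mg_carrier: "Mg k \<in> carrier_mat (hg_nv (Suc k)) (hg_nv (Suc k))"
  by (simp add: Mg_def skew_adj_def)

lemma Mg_entry: "u < hg_nv (Suc k) \<Longrightarrow> v < hg_nv (Suc k) \<Longrightarrow> Mg k $$ (u,v) = sk (hg_arcs (Suc k)) u v"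
  by (simp add: Mg_def skew_adj_def sk_def)

definition hmA :: "nat \<Rightarrow> nat \<Rightarrow> nat" where "hmA i a = hg_emb 0 i a"
definition hmB :: "nat \<Rightarrow> nat \<Rightarrow> nat" where "hmB i a = (if hmA i a \<ge> 2 then hmA i a - 2 else 2)"

lemma sum2: "(\<Sum>a<(2::nat). f a) = f 0 + (f 1 :: real)"
  by (simp add: numeral_2_eq_2 lessThan_Suc)

lemma ex2: "(\<exists>a<(2::nat). P a) \<longleftrightarrow> P 0 \<or> P 1"
  using less_2_cases_iff by auto

lemma hmA_ne: "c < 4 \<Longrightarrow> hmA c 0 \<noteq> hmA c 1"
  using i4[of c] by (auto simp: hmA_def hg_emb_def)

lemma hmA_lt: "c < 4 \<Longrightarrow> a < 2 \<Longrightarrow> hmA c a < 4"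
  using emb_hub by (simp add: hmA_def)

context
  fixes k :: nat
begin

abbreviation "nn \<equiv> hg_nv (Suc k)"
abbreviation "mm \<equiv> hg_nv (Suc k) - 2"
abbreviation "AA \<equiv> hg_arcs (Suc k)"
abbreviation "AA' \<equiv> hg_arcs (Suc (Suc k))"

lemma bndA: "(a,b) \<in> AA \<Longrightarrow> a < nn \<and> b < nn" using ginv_all[of k] unfolding ginv_def by blast

lemma emb_big: "i < 4 \<Longrightarrow> a < nn \<Longrightarrow> 4 \<le> hg_emb nn i a \<Longrightarrow> 2 \<le> a"
  using emb_hub[of i a nn] by (cases "a < 2") auto

lemma dec_inj: assumes n: "n \<ge> 4" and i: "i < 4" and a: "a < n" and w: "4 \<le> w" "w < 4 + 4*(n-2)"
  and e: "hg_emb n i a = w"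
  shows "i = (w-4) div (n-2) \<and> a = (w-4) mod (n-2) + 2"
proof -
  have a2: "2 \<le> a"
  proof (rule ccontr)
    assume "\<not> 2 \<le> a" then have "hg_emb n i a < 4" using emb_hub[OF i] by simp
    then show False using e w by simp
  qed
  note d = decode[OF n w]
  have e2: "hg_emb n i a = hg_emb n ((w-4) div (n-2)) ((w-4) mod (n-2) + 2)"
    using d e by simp
  show ?thesis using emb_inj[OF n i _ a _ a2 e2] d by blast
qed

lemma rel_ii: assumes u: "4 \<le> u" "u < 4 + 4*mm" and v: "4 \<le> v" "v < 4 + 4*mm"
  shows "(u,v) \<in> AA' \<longleftrightarrow> (u-4) div mm = (v-4) div mm \<and> ((u-4) mod mm + 2, (v-4) mod mm + 2) \<in> AA"
proof
  have n: "nn \<ge> 4" by (rule nv_ge)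
  assume "(u,v) \<in> AA'"
  then obtain i a b where i: "i < 4" and ab: "(a,b) \<in> AA" and p: "hg_emb nn i a = u" and q: "hg_emb nn i b = v"
    unfolding arcs_SS by metis
  have a: "a < nn" and b: "b < nn" using bndA[OF ab] by auto
  have 1: "i = (u-4) div mm \<and> a = (u-4) mod mm + 2" by (rule dec_inj[OF n i a u p])
  have 2: "i = (v-4) div mm \<and> b = (v-4) mod mm + 2" by (rule dec_inj[OF n i b v q])
  show "(u-4) div mm = (v-4) div mm \<and> ((u-4) mod mm + 2, (v-4) mod mm + 2) \<in> AA"
    using 1 2 ab by auto
next
  have n: "nn \<ge> 4" by (rule nv_ge)
  note du = decode[OF n u] and dv = decode[OF n v]
  assume h: "(u-4) div mm = (v-4) div mm \<and> ((u-4) mod mm + 2, (v-4) mod mm + 2) \<in> AA"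
  show "(u,v) \<in> AA'" unfolding arcs_SS
    apply (rule exI[of _ "(u-4) div mm"])
    apply (rule conjI)
     apply (rule conjunct1[OF du])
    apply (rule exI[of _ "(u-4) mod mm + 2"])
    apply (rule exI[of _ "(v-4) mod mm + 2"])
    using h du dv by simp
qed

lemma rel_hi: assumes u: "u < 4" and v: "4 \<le> v" "v < 4 + 4*mm"
  shows "(u,v) \<in> AA' \<longleftrightarrow> (\<exists>a<2. hmA ((v-4) div mm) a = u \<and> (a, (v-4) mod mm + 2) \<in> AA)"
    and "(v,u) \<in> AA' \<longleftrightarrow> (\<exists>a<2. hmA ((v-4) div mm) a = u \<and> ((v-4) mod mm + 2, a) \<in> AA)"
proof -
  have n: "nn \<ge> 4" by (rule nv_ge)
  note dv = decode[OF n v]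
  have hm: "a < 2 \<Longrightarrow> hmA c a = hg_emb nn c a" for a c using emb_hub0[of a nn c] by (simp add: hmA_def)
  show "(u,v) \<in> AA' \<longleftrightarrow> (\<exists>a<2. hmA ((v-4) div mm) a = u \<and> (a, (v-4) mod mm + 2) \<in> AA)"
  proof
    assume "(u,v) \<in> AA'"
    then obtain i a b where i: "i < 4" and ab: "(a,b) \<in> AA" and p: "hg_emb nn i a = u" and q: "hg_emb nn i b = v"
      unfolding arcs_SS by metis
    have a: "a < nn" and b: "b < nn" using bndA[OF ab] by auto
    have a2: "a < 2" by (rule emb_small[OF i, of nn]) (use p u in simp)
    have 2: "i = (v-4) div mm \<and> b = (v-4) mod mm + 2" by (rule dec_inj[OF n i b v q])
    show "\<exists>a<2. hmA ((v-4) div mm) a = u \<and> (a, (v-4) mod mm + 2) \<in> AA"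
      using 2 ab a2 p hm[OF a2, of i] by auto
  next
    assume "\<exists>a<2. hmA ((v-4) div mm) a = u \<and> (a, (v-4) mod mm + 2) \<in> AA"
    then obtain a where a2: "a < 2" and h: "hmA ((v-4) div mm) a = u" "(a, (v-4) mod mm + 2) \<in> AA" by blast
    show "(u,v) \<in> AA'" unfolding arcs_SS
      apply (rule exI[of _ "(v-4) div mm"])
      apply (rule conjI)
       apply (rule conjunct1[OF dv])
      apply (rule exI[of _ a])
      apply (rule exI[of _ "(v-4) mod mm + 2"])
      using h dv hm[OF a2, of "(v-4) div mm"] by simp
  qed
  show "(v,u) \<in> AA' \<longleftrightarrow> (\<exists>a<2. hmA ((v-4) div mm) a = u \<and> ((v-4) mod mm + 2, a) \<in> AA)"
  proof
    assume "(v,u) \<in> AA'"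
    then obtain i a b where i: "i < 4" and ab: "(b,a) \<in> AA" and p: "hg_emb nn i a = u" and q: "hg_emb nn i b = v"
      unfolding arcs_SS by metis
    have a: "a < nn" and b: "b < nn" using bndA[OF ab] by auto
    have a2: "a < 2" by (rule emb_small[OF i, of nn]) (use p u in simp)
    have 2: "i = (v-4) div mm \<and> b = (v-4) mod mm + 2" by (rule dec_inj[OF n i b v q])
    show "\<exists>a<2. hmA ((v-4) div mm) a = u \<and> ((v-4) mod mm + 2, a) \<in> AA"
      using 2 ab a2 p hm[OF a2, of i] by auto
  next
    assume "\<exists>a<2. hmA ((v-4) div mm) a = u \<and> ((v-4) mod mm + 2, a) \<in> AA"
    then obtain a where a2: "a < 2" and h: "hmA ((v-4) div mm) a = u" "((v-4) mod mm + 2, a) \<in> AA" by blast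
    show "(v,u) \<in> AA'" unfolding arcs_SS
      apply (rule exI[of _ "(v-4) div mm"])
      apply (rule conjI)
       apply (rule conjunct1[OF dv])
      apply (rule exI[of _ "(v-4) mod mm + 2"])
      apply (rule exI[of _ a])
      using h dv hm[OF a2, of "(v-4) div mm"] by simp
  qed
qed

lemma rel_hh: assumes u: "u < 4" and v: "v < 4"
  shows "(u,v) \<in> AA' \<longleftrightarrow> (u,v) \<in> hg_arcs 1"
proof
  assume "(u,v) \<in> AA'"
  then obtain i a b where i: "i < 4" and ab: "(a,b) \<in> AA" and p: "hg_emb nn i a = u" and q: "hg_emb nn i b = v"
    unfolding arcs_SS by metis
  have a2: "a < 2" by (rule emb_small[OF i, of nn]) (use p u in simp)
  have b2: "b < 2" by (rule emb_small[OF i, of nn]) (use q v in simp)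
  have "a = 0 \<and> b = 1" using hub01[OF ginv_all ab a2 b2] .
  then have "u = hg_emb nn i 0" "v = hg_emb nn i 1" using p q by auto
  then show "(u,v) \<in> hg_arcs 1" using i4[OF i] by (auto simp: hg_emb_def)
next
  have r01: "(0,1) \<in> AA" using ginv_all[of k] unfolding ginv_def by blast
  have w: "(hg_emb nn i 0, hg_emb nn i 1) \<in> AA'" if "i < 4" for i
    unfolding arcs_SS by (rule exI[of _ i], rule conjI[OF that], rule exI[of _ 0], rule exI[of _ 1]) (use r01 in simp)
  have w0: "(0,2) \<in> AA'" using w[of 0] by (simp add: hg_emb_def)
  have w1: "(2,3) \<in> AA'" using w[of 1] by (simp add: hg_emb_def)
  have w2: "(3,1) \<in> AA'" using w[of 2] by (simp add: hg_emb_def)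
  have w3: "(0,1) \<in> AA'" using w[of 3] by (simp add: hg_emb_def)
  assume "(u,v) \<in> hg_arcs 1"
  then have "(u,v) \<in> {(0,1),(0,2),(3,1),(2,3)}" by (simp add: One_nat_def)
  then show "(u,v) \<in> AA'" using w0 w1 w2 w3 by blast
qed

lemma main_eq: "Mg (Suc k) = PP 4 hmA mm (Mg 0) (blkC (Mg k)) (blkZ (Mg k)) (intr (Mg k)) 4"
proof (rule eq_matI)
  have n: "nn \<ge> 4" by (rule nv_ge)
  have N: "hg_nv (Suc (Suc k)) = 4 + 4*mm" by (rule nv_SS)
  have dimk: "dim_row (Mg k) = nn" "dim_col (Mg k) = nn" using Mg_carrier[of k] by auto
  show "dim_row (Mg (Suc k)) = dim_row (PP 4 hmA mm (Mg 0) (blkC (Mg k)) (blkZ (Mg k)) (intr (Mg k)) 4)"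
    using Mg_carrier[of "Suc k"] N by (simp add: PP_def)
  show "dim_col (Mg (Suc k)) = dim_col (PP 4 hmA mm (Mg 0) (blkC (Mg k)) (blkZ (Mg k)) (intr (Mg k)) 4)"
    using Mg_carrier[of "Suc k"] N by (simp add: PP_def)
  fix u v assume u: "u < dim_row (PP 4 hmA mm (Mg 0) (blkC (Mg k)) (blkZ (Mg k)) (intr (Mg k)) 4)"
    and v: "v < dim_col (PP 4 hmA mm (Mg 0) (blkC (Mg k)) (blkZ (Mg k)) (intr (Mg k)) 4)"
  have u': "u < 4 + 4*mm" and v': "v < 4 + 4*mm" using u v by (auto simp: PP_def)
  have L: "Mg (Suc k) $$ (u,v) = sk AA' u v" using Mg_entry[of u "Suc k" v] u' v' N by simp
  have R: "PP 4 hmA mm (Mg 0) (blkC (Mg k)) (blkZ (Mg k)) (intr (Mg k)) 4 $$ (u,v) =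
    (if u < 4 then (if v < 4 then Mg 0 $$ (u,v) else (\<Sum>a<2. if hmA ((v-4) div mm) a = u then blkC (Mg k) $$ (a, (v-4) mod mm) else 0))
     else if v < 4 then (\<Sum>b<2. if hmA ((u-4) div mm) b = v then blkZ (Mg k) $$ ((u-4) mod mm, b) else 0)
     else if (u-4) div mm = (v-4) div mm then intr (Mg k) $$ ((u-4) mod mm, (v-4) mod mm) else 0)"
    using u' v' by (simp add: PP_def)
  show "Mg (Suc k) $$ (u,v) = PP 4 hmA mm (Mg 0) (blkC (Mg k)) (blkZ (Mg k)) (intr (Mg k)) 4 $$ (u,v)"
    unfolding L R
  proof (cases "u < 4"; cases "v < 4")
    assume a: "u < 4" "v < 4"
    have "Mg 0 $$ (u,v) = sk (hg_arcs 1) u v" using Mg_entry[of u 0 v] a by simp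
    then show "sk AA' u v = (if u < 4 then (if v < 4 then Mg 0 $$ (u,v) else (\<Sum>a<2. if hmA ((v-4) div mm) a = u then blkC (Mg k) $$ (a, (v-4) mod mm) else 0))
     else if v < 4 then (\<Sum>b<2. if hmA ((u-4) div mm) b = v then blkZ (Mg k) $$ ((u-4) mod mm, b) else 0)
     else if (u-4) div mm = (v-4) div mm then intr (Mg k) $$ ((u-4) mod mm, (v-4) mod mm) else 0)"
      using a unfolding sk_def rel_hh[OF a] rel_hh[OF a(2) a(1)] by simp
  next
    assume a: "u < 4" "\<not> v < 4"
    let ?c = "(v-4) div mm" and ?r = "(v-4) mod mm"
    have v4: "4 \<le> v" using a by simp
    note dv = decode[OF n v4 v']
    have C: "blkC (Mg k) $$ (b, ?r) = sk AA b (?r + 2)" if "b < 2" for b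
      using that dv dimk Mg_entry[of b k "?r+2"] by (simp add: blkC_def)
    have ne: "hmA ?c 0 \<noteq> hmA ?c 1" using hmA_ne dv by blast
    show "sk AA' u v = (if u < 4 then (if v < 4 then Mg 0 $$ (u,v) else (\<Sum>a<2. if hmA ((v-4) div mm) a = u then blkC (Mg k) $$ (a, (v-4) mod mm) else 0))
     else if v < 4 then (\<Sum>b<2. if hmA ((u-4) div mm) b = v then blkZ (Mg k) $$ ((u-4) mod mm, b) else 0)
     else if (u-4) div mm = (v-4) div mm then intr (Mg k) $$ ((u-4) mod mm, (v-4) mod mm) else 0)"
      using a ne by (auto simp del: hg_arcs.simps simp: sum2 C sk_def rel_hi[OF a(1) v4 v'] ex2)
  next
    assume a: "\<not> u < 4" "v < 4"
    let ?c = "(u-4) div mm" and ?r = "(u-4) mod mm"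
    have u4: "4 \<le> u" using a by simp
    note du = decode[OF n u4 u']
    have Z: "blkZ (Mg k) $$ (?r, b) = sk AA (?r + 2) b" if "b < 2" for b
      using that du dimk Mg_entry[of "?r+2" k b] by (simp add: blkZ_def)
    have ne: "hmA ?c 0 \<noteq> hmA ?c 1" using hmA_ne du by blast
    show "sk AA' u v = (if u < 4 then (if v < 4 then Mg 0 $$ (u,v) else (\<Sum>a<2. if hmA ((v-4) div mm) a = u then blkC (Mg k) $$ (a, (v-4) mod mm) else 0))
     else if v < 4 then (\<Sum>b<2. if hmA ((u-4) div mm) b = v then blkZ (Mg k) $$ ((u-4) mod mm, b) else 0)
     else if (u-4) div mm = (v-4) div mm then intr (Mg k) $$ ((u-4) mod mm, (v-4) mod mm) else 0)"
      using a ne by (auto simp del: hg_arcs.simps simp: sum2 Z sk_def rel_hi[OF a(2) u4 u'] ex2)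
  next
    assume a: "\<not> u < 4" "\<not> v < 4"
    have u4: "4 \<le> u" and v4: "4 \<le> v" using a by auto
    note du = decode[OF n u4 u'] and dv = decode[OF n v4 v']
    have B: "intr (Mg k) $$ ((u-4) mod mm, (v-4) mod mm) = sk AA ((u-4) mod mm + 2) ((v-4) mod mm + 2)"
      using du dv dimk Mg_entry[of "(u-4) mod mm + 2" k "(v-4) mod mm + 2"] by (simp add: intr_def)
    show "sk AA' u v = (if u < 4 then (if v < 4 then Mg 0 $$ (u,v) else (\<Sum>a<2. if hmA ((v-4) div mm) a = u then blkC (Mg k) $$ (a, (v-4) mod mm) else 0))
     else if v < 4 then (\<Sum>b<2. if hmA ((u-4) div mm) b = v then blkZ (Mg k) $$ ((u-4) mod mm, b) else 0)
     else if (u-4) div mm = (v-4) div mm then intr (Mg k) $$ ((u-4) mod mm, (v-4) mod mm) else 0)"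
      using a unfolding B sk_def rel_ii[OF u4 u' v4 v'] rel_ii[OF v4 v' u4 u'] by auto
  qed
qed

end



lemma Mg_skew: "i < hg_nv (Suc k) \<Longrightarrow> j < hg_nv (Suc k) \<Longrightarrow> Mg k $$ (j,i) = - Mg k $$ (i,j)"
proof -
  assume i: "i < hg_nv (Suc k)" and j: "j < hg_nv (Suc k)"
  have as: "(x,y) \<in> hg_arcs (Suc k) \<Longrightarrow> (y,x) \<notin> hg_arcs (Suc k)" for x y
    using ginv_all[of k] unfolding ginv_def by blast
  show ?thesis unfolding Mg_entry[OF i j] Mg_entry[OF j i] sk_def using as[of i j] as[of j i] by auto
qed

lemma Mg_hub: "Mg k $$ (0,0) = 0" "Mg k $$ (0,1) = 1" "Mg k $$ (1,0) = -1" "Mg k $$ (1,1) = 0"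
proof -
  have n: "hg_nv (Suc k) \<ge> 4" by (rule nv_ge)
  have as: "(x,y) \<in> hg_arcs (Suc k) \<Longrightarrow> (y,x) \<notin> hg_arcs (Suc k)" for x y
    using ginv_all[of k] unfolding ginv_def by blast
  have r: "(0,1) \<in> hg_arcs (Suc k)" using ginv_all[of k] unfolding ginv_def by blast
  show "Mg k $$ (0,0) = 0" "Mg k $$ (0,1) = 1" "Mg k $$ (1,0) = -1" "Mg k $$ (1,1) = 0"
    using n as[of 0 0] as[of 1 1] as[OF r] r by (auto simp add: Mg_entry sk_def)
qed


lemma sum4: "(\<Sum>i<(4::nat). f i) = f 0 + f 1 + f 2 + (f 3 :: real)"
  by (simp add: eval_nat_numeral lessThan_Suc)

lemma mat_eta: "A \<in> carrier_mat n n \<Longrightarrow> A = mat n n (\<lambda>(u,v). A $$ (u,v))"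
  by (rule eq_matI) auto

lemma Mg0_entry: "u < 4 \<Longrightarrow> v < 4 \<Longrightarrow> Mg 0 $$ (u,v) = sk (hg_arcs 1) u v"
  using Mg_entry[of u 0 v] by simp

lemma step_det:
  assumes d: "det (intr (Mg k)) \<noteq> 0"
  shows "\<exists>s. det (Mg k) = det (intr (Mg k)) * s^2 \<and>
     det (Mg (Suc k)) = det (intr (Mg k))^4 * (4 * s^4) \<and>
     det (intr (Mg (Suc k))) = det (intr (Mg k))^4 * s^2"
proof -
  define n where "n = hg_nv (Suc k)"
  define m where "m = n - 2"
  have n4: "n \<ge> 4" unfolding n_def by (rule nv_ge)
  have m0: "m > 0" using n4 unfolding m_def by simp
  define M where "M = Mg k"
  have M: "M \<in> carrier_mat n n" unfolding M_def n_def by (rule Mg_carrier)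
  define B where "B = intr M"
  define C where "C = blkC M"
  define Z where "Z = blkZ M"
  have B: "B \<in> carrier_mat m m" using M unfolding B_def intr_def m_def by auto
  have C: "C \<in> carrier_mat 2 m" using M unfolding C_def blkC_def m_def by auto
  have Z: "Z \<in> carrier_mat m 2" using M unfolding Z_def blkZ_def m_def by auto
  have Mb: "blkM M \<in> carrier_mat 2 2" unfolding blkM_def by auto
  have dB: "det B \<noteq> 0" using d unfolding B_def M_def .
  obtain Bi where Bi: "Bi \<in> carrier_mat m m" and BBi: "B * Bi = 1\<^sub>m m" and BiB: "Bi * B = 1\<^sub>m m"
    using inv_exists[OF B dB] by blast
  define W where "W = C * Bi * Z"
  have W: "W \<in> carrier_mat 2 2" unfolding W_def using C Bi Z by auto
  have Msk: "\<And>i j. i < n \<Longrightarrow> j < n \<Longrightarrow> M $$ (j,i) = - M $$ (i,j)"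
    unfolding M_def n_def by (rule Mg_skew)
  have BBi': "intr M * Bi = 1\<^sub>m (n-2)" using BBi unfolding B_def m_def .
  have skW: "W\<^sup>T = - W" unfolding W_def C_def Z_def
    by (rule skew_W[OF M _ Msk Bi[unfolded m_def] BBi']) (use n4 in simp)
  have wT: "W $$ (b,a) = - W $$ (a,b)" if "a < 2" "b < 2" for a b
  proof -
    have "W\<^sup>T $$ (a,b) = (- W) $$ (a,b)" using skW by simp
    then show ?thesis using W that by simp
  qed
  have w00: "W $$ (0,0) = 0" using wT[of 0 0] by simp
  have w11: "W $$ (1,1) = 0" using wT[of 1 1] by simp
  have w10: "W $$ (1,0) = - W $$ (0,1)" using wT[of 0 1] by simp
  define s where "s = 1 - W $$ (0,1)"
  have hub: "M $$ (0,0) = 0" "M $$ (0,1) = 1" "M $$ (1,0) = -1" "M $$ (1,1) = 0"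
    unfolding M_def by (rule Mg_hub)+
  have "det M = det B * det (blkM M - C * Bi * Z)"
    unfolding B_def C_def Z_def
    by (subst blk_decomp[OF M], use n4 in simp, rule schur_det[OF Mb], insert C Z B Bi BBi, auto simp: C_def Z_def B_def)
  also have "blkM M - C * Bi * Z = mat 2 2 (\<lambda>(a,b). M $$ (a,b) - W $$ (a,b))"
    by (rule eq_matI) (use C Bi Z in \<open>auto simp: blkM_def W_def\<close>)
  also have "det \<dots> = s^2" unfolding det2 using hub w00 w11 w10 by (simp add: s_def power2_eq_square algebra_simps)
  finally have a: "det M = det B * s^2" .
  have M0: "Mg 0 \<in> carrier_mat 4 4" using Mg_carrier[of 0] by simp
  have PPb: "Mg (Suc k) = PP 4 hmA m (Mg 0) C Z B 4"
    unfolding main_eq m_def n_def C_def Z_def B_def M_def ..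
  define R where "R = red 4 hmA W (Mg 0) 4"
  have R: "R \<in> carrier_mat 4 4" unfolding R_def by (rule red_carrier[OF M0 W])
  have "det (Mg (Suc k)) = det B ^ 4 * det R"
    unfolding PPb R_def W_def by (rule PP_det[OF m0 M0 C Z B Bi BBi])
  also have "det R = 4 * s^4"
  proof -
    have "det R = det (mat 4 4 (\<lambda>(u,v). R $$ (u,v)))" using mat_eta[OF R] by simp
    also have "\<dots> = 4 * s^4"
    proof (rule det4_pattern)
      fix u v :: nat assume u: "u < 4" and v: "v < 4"
      have "R $$ (u,v) = Mg 0 $$ (u,v) - (\<Sum>i<4. (\<Sum>b<2. (\<Sum>a<2. (if hmA i a = u then 1 else 0) * W $$ (a,b)) * (if hmA i b = v then 1 else 0)))"
        unfolding R_def red_entry[OF M0 W u v] using Qh_entry[OF W u v] by simp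
      also have "\<dots> = s * (if (u,v) \<in> {(0,1),(0,2),(3,1),(2,3)} then 1
        else if (v,u) \<in> {(0,1),(0,2),(3,1),(2,3)} then -1 else 0)"
        unfolding Mg0_entry[OF u v] sum4 sum2 using i4[OF u] i4[OF v] w00 w11 w10
        by (elim disjE) (simp_all add: hmA_def hg_emb_def sk_def s_def)
      finally show "(\<lambda>(u,v). R $$ (u,v)) (u,v) = s * (if (u,v) \<in> {(0,1),(0,2),(3,1),(2,3)} then 1
        else if (v,u) \<in> {(0,1),(0,2),(3,1),(2,3)} then -1 else 0)" by simp
    qed
    finally show ?thesis .
  qed
  finally have b: "det (Mg (Suc k)) = det B ^ 4 * (4 * s^4)" .
  have iM0: "intr (Mg 0) \<in> carrier_mat 2 2" using M0 by (auto simp: intr_def)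
  define R2 where "R2 = red 2 hmB W (intr (Mg 0)) 4"
  have "det (intr (Mg (Suc k))) = det B ^ 4 * det R2"
    unfolding PPb intr_PP[OF hmB_def M0] R2_def W_def by (rule PP_det[OF m0 iM0 C Z B Bi BBi])
  also have "det R2 = s^2"
  proof -
    have R2: "R2 \<in> carrier_mat 2 2" unfolding R2_def by (rule red_carrier[OF iM0 W])
    have e: "R2 $$ (u,v) = intr (Mg 0) $$ (u,v) - (\<Sum>i<4. (\<Sum>b<2. (\<Sum>a<2. (if hmB i a = u then 1 else 0) * W $$ (a,b)) * (if hmB i b = v then 1 else 0)))"
      if u: "u < 2" and v: "v < 2" for u v
      unfolding R2_def red_entry[OF iM0 W u v] using Qh_entry[OF W u v] by simp
    have ie: "intr (Mg 0) $$ (u,v) = sk (hg_arcs 1) (u+2) (v+2)" if "u < 2" "v < 2" for u v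
      using that Mg0_entry[of "u+2" "v+2"] M0 by (simp add: intr_def)
    have "det R2 = det (mat 2 2 (\<lambda>(u,v). R2 $$ (u,v)))" using mat_eta[OF R2] by simp
    also have "\<dots> = R2 $$ (0,0) * R2 $$ (1,1) - R2 $$ (0,1) * R2 $$ (1,0)" by (simp add: det2)
    also have "\<dots> = s^2"
    proof -
      have r00: "R2 $$ (0,0) = 0" using e[of 0 0] ie[of 0 0] w00 w11 w10
        by (simp add: sum4 sum2 hmB_def hmA_def hg_emb_def sk_def s_def)
      have r11: "R2 $$ (1,1) = 0" using e[of 1 1] ie[of 1 1] w00 w11 w10
        by (simp add: sum4 sum2 hmB_def hmA_def hg_emb_def sk_def s_def)
      have r01: "R2 $$ (0,1) = s" using e[of 0 1] ie[of 0 1] w00 w11 w10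
        by (simp add: sum4 sum2 hmB_def hmA_def hg_emb_def sk_def s_def)
      have r10: "R2 $$ (1,0) = -s" using e[of 1 0] ie[of 1 0] w00 w11 w10
        by (simp add: sum4 sum2 hmB_def hmA_def hg_emb_def sk_def s_def)
      show ?thesis unfolding r00 r11 r01 r10 by (simp add: power2_eq_square)
    qed
    finally show ?thesis .
  qed
  finally have c: "det (intr (Mg (Suc k))) = det B ^ 4 * s^2" .
  show ?thesis using a b c unfolding B_def M_def by blast
qed



fun fe :: "nat \<Rightarrow> nat" where
  "fe 0 = 0"
| "fe (Suc k) = 4 * fe k + Suc k"

lemma fe_closed: "9 * fe k + 3 * Suc k + 1 = 4 ^ Suc k"
proof (induction k)
  case 0 then show ?case by simp
next
  case (Suc k)
  have "4 * (9 * fe k + 3 * Suc k + 1) = 4 * 4 ^ Suc k" using Suc.IH by simp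
  then show ?case by simp
qed

lemma dets: "det (Mg k) = 4^(fe k + Suc k) \<and> det (intr (Mg k)) = 4^(fe k)"
proof (induction k)
  case 0
  have M0: "Mg 0 \<in> carrier_mat 4 4" using Mg_carrier[of 0] by simp
  have "det (Mg 0) = det (mat 4 4 (\<lambda>(u,v). Mg 0 $$ (u,v)))" using mat_eta[OF M0] by simp
  also have "\<dots> = 4 * 1^4"
  proof (rule det4_pattern)
    fix u v :: nat assume u: "u < 4" and v: "v < 4"
    show "(\<lambda>(u,v). Mg 0 $$ (u,v)) (u,v) = 1 * (if (u,v) \<in> {(0,1),(0,2),(3,1),(2,3)} then 1
        else if (v,u) \<in> {(0,1),(0,2),(3,1),(2,3)} then -1 else 0)"
      using Mg0_entry[OF u v] by (simp add: sk_def One_nat_def)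
  qed
  finally have a: "det (Mg 0) = 4" by simp
  have iM0: "intr (Mg 0) \<in> carrier_mat 2 2" using M0 by (auto simp: intr_def)
  have ie: "intr (Mg 0) $$ (u,v) = sk (hg_arcs 1) (u+2) (v+2)" if "u < 2" "v < 2" for u v
    using that Mg0_entry[of "u+2" "v+2"] M0 by (simp add: intr_def)
  have "det (intr (Mg 0)) = det (mat 2 2 (\<lambda>(u,v). intr (Mg 0) $$ (u,v)))" using mat_eta[OF iM0] by simp
  also have "\<dots> = intr (Mg 0) $$ (0,0) * intr (Mg 0) $$ (1,1) - intr (Mg 0) $$ (0,1) * intr (Mg 0) $$ (1,0)"
    by (simp add: det2)
  also have "\<dots> = 1" using ie[of 0 0] ie[of 1 1] ie[of 0 1] ie[of 1 0] by (simp add: sk_def)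
  finally have b: "det (intr (Mg 0)) = 1" .
  show ?case using a b by simp
next
  case (Suc k)
  define d where "d = det (intr (Mg k))"
  have d: "d = 4^(fe k)" using Suc.IH d_def by simp
  have d0: "d \<noteq> 0" using d by simp
  obtain s where s1: "det (Mg k) = d * s^2" and s2: "det (Mg (Suc k)) = d^4 * (4 * s^4)"
    and s3: "det (intr (Mg (Suc k))) = d^4 * s^2"
    using step_det[of k] d0 unfolding d_def by blast
  have "d * s^2 = d * 4^(Suc k)" using s1 Suc.IH d by (simp add: power_add)
  then have ss: "s^2 = 4^(Suc k)" using d0 by simp
  have s4: "s^4 = (4^(Suc k))^2" using ss by (metis power_mult numeral_Bit0 mult_2 power2_eq_square power_even_eq)
  have dd: "d^4 = 4^(4 * fe k)" unfolding d by (simp add: power_mult[symmetric] mult.commute)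
  have "det (Mg (Suc k)) = 4^(4 * fe k) * (4 * (4^(Suc k))^2)" unfolding s2 dd s4 ..
  also have "\<dots> = 4^(fe (Suc k) + Suc (Suc k))"
    by (simp add: power_add power_mult[symmetric] algebra_simps)
  finally have a: "det (Mg (Suc k)) = 4^(fe (Suc k) + Suc (Suc k))" .
  have "det (intr (Mg (Suc k))) = 4^(4 * fe k) * 4^(Suc k)" unfolding s3 dd ss ..
  also have "\<dots> = 4^(fe (Suc k))" by (simp add: power_add[symmetric])
  finally show ?case using a by simp
qed

theorem lemma9:
  fixes g :: nat
  assumes "g \<ge> 1"
  shows "real_of_int (det (skew_adj g)) =
           4 powr ((1/9) * 4 ^ g + (2/3) * real g - 1/9)"
proof -
  obtain k where g: "g = Suc k" using assms by (cases g) auto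
  have "real_of_int (det (skew_adj g)) = det (Mg k)"
    unfolding Mg_def g by (simp add: of_int_hom.hom_det)
  also have "\<dots> = 4^(fe k + g)" using dets[of k] g by simp
  also have "\<dots> = 4 powr (real (fe k + g))" by (rule powr_realpow[symmetric]) simp
  also have "real (fe k + g) = (1/9) * 4 ^ g + (2/3) * real g - 1/9"
  proof -
    have "real (9 * fe k + 3 * Suc k + 1) = real (4 ^ Suc k)" using fe_closed[of k] by metis
    then have "9 * real (fe k) + 3 * real g + 1 = 4 ^ g" unfolding g by simp
    then show ?thesis by simp
  qed
  finally show ?thesis .
qed

end
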